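(* For every even integer $g\geqslant2$, the ideal $J_g^-\subset\mathbb{C}[\alpha,\gamma]$ is generated by $\zeta_g^-$ together with $\gamma J_{g-2}^-$. Moreover, $\gamma^i\zeta^-_{g-2i}\in J_g^-$ for all integers $i\geqslant0$.
   Context: Let $\zeta_k\in\mathbb{C}[\alpha,\beta,\gamma]$ be defined by $\zeta_i=0$ for $i<0$, $\zeta_0=1$, $\zeta_{k+1}=\alpha\zeta_k+k^2(\beta+(-1)^k8)\zeta_{k-1}+2k(k-1)\gamma\zeta_{k-2}$ ($k\geqslant0$). Let $\zeta_k^\pm\in\mathbb{C}[\alpha,\gamma]$ be obtained by setting $\beta=\pm8$ in $\zeta_k$, and $J_k^\pm=(\zeta^\pm_k,\zeta^\pm_{k+1},\zeta^\pm_{k+2})\subset\mathbb{C}[\alpha,\gamma]$. Explicitly $\zeta^-_{k+1}=\alpha\zeta^-_k-16k^2\zeta^-_{k-1}+2k(k-1)\gamma\zeta^-_{k-2}$ for $k$ odd and $\zeta^-_{k+1}=\alpha\zeta^-_k+2k(k-1)\gamma\zeta^-_{k-2}$ for $k$ even. *)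

theory Defs
  imports "HOL-Computational_Algebra.Polynomial" Complex_Main
begin

text \<open>The ring C[alpha,gamma] is modelled as (C[alpha])[gamma], i.e. complex poly poly:
  the outer polynomial variable is gamma, the inner one is alpha.\<close>

type_synonym cpoly2 = "complex poly poly"

definition alphaP :: cpoly2 where "alphaP = [:[:0, 1:]:]"
definition gammaP :: cpoly2 where "gammaP = [:0, 1:]"

definition ideal_gen :: "'a::comm_ring_1 set \<Rightarrow> 'a set" where
  "ideal_gen S = {(\<Sum>s\<in>t. r s * s) | t r. finite t \<and> t \<subseteq> S}"

text \<open>zeta k for k >= 0, with parameters a = alpha, b = beta, c = gamma.
  Recurrence zeta(k+1) = a zeta(k) + k^2 (b + (-1)^k 8) zeta(k-1) + 2k(k-1) c zeta(k-2),
  zeta_i = 0 for i < 0, zeta_0 = 1 (the cases k = 0, 1 are written out since the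
  terms with negative index vanish).\<close>
fun zeta :: "'a::comm_ring_1 \<Rightarrow> 'a \<Rightarrow> 'a \<Rightarrow> nat \<Rightarrow> 'a" where
  "zeta a b c 0 = 1"
| "zeta a b c (Suc 0) = a * zeta a b c 0"
| "zeta a b c (Suc (Suc 0)) = a * zeta a b c 1 + of_nat (1^2) * (b + (-1)^1 * 8) * zeta a b c 0"
| "zeta a b c (Suc (Suc (Suc k))) =
     a * zeta a b c (k + 2)
     + of_nat ((k + 2)^2) * (b + (-1)^(k + 2) * 8) * zeta a b c (k + 1)
     + of_nat (2 * (k + 2) * (k + 1)) * c * zeta a b c k"

definition zetaZ :: "'a::comm_ring_1 \<Rightarrow> 'a \<Rightarrow> 'a \<Rightarrow> int \<Rightarrow> 'a" where
  "zetaZ a b c n = (if n < 0 then 0 else zeta a b c (nat n))"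

definition zeta_minus :: "int \<Rightarrow> cpoly2" where
  "zeta_minus n = zetaZ alphaP (-8) gammaP n"

definition J_minus :: "int \<Rightarrow> cpoly2 set" where
  "J_minus k = ideal_gen {zeta_minus k, zeta_minus (k + 1), zeta_minus (k + 2)}"

end

theory Submission imports Defs begin

interpretation R: module "(*) :: 'a::comm_ring_1 \<Rightarrow> 'a \<Rightarrow> 'a"
  by unfold_locales (auto simp: algebra_simps)

lemma ideal_gen_span: "ideal_gen S = R.span S"
  unfolding ideal_gen_def R.span_explicit by simp

abbreviation Z :: "nat \<Rightarrow> cpoly2" where "Z n \<equiv> zeta alphaP (-8) gammaP n"

lemma zm: "zeta_minus (int n) = Z n"
  by (simp add: zeta_minus_def zetaZ_def)



declare zeta.simps[simp del]

lemma R1g: "zeta a (-8) c (2*m+3) = a * zeta a (-8) c (2*m+2) + of_nat (2*(2*m+2)*(2*m+1)) * (c * zeta a (-8) c (2*m))"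
proof -
  have e: "2*m+3 = Suc (Suc (Suc (2*m)))" by simp
  have p: "(-1::'a) ^ (2*m+2) = 1" by simp
  have "zeta a (-8) c (2*m+3) = a * zeta a (-8) c (2*m+2) + of_nat ((2*m+2)^2) * (-8 + (-1)^(2*m+2)*8) * zeta a (-8) c (2*m+1) + of_nat (2*(2*m+2)*(2*m+1)) * c * zeta a (-8) c (2*m)"
    unfolding e by (rule zeta.simps(4))
  also have "\<dots> = a * zeta a (-8) c (2*m+2) + of_nat (2*(2*m+2)*(2*m+1)) * (c * zeta a (-8) c (2*m))"
    unfolding p by (simp only: mult.assoc mult_1 left_minus mult_zero_right mult_zero_left add_0_right)
  finally show ?thesis .
qed



lemma aux16: "(u::'a::comm_ring_1) + of_nat n * (-8 + (-1)*8) * z + y = u - of_nat (16*n) * z + y"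
proof -
  have 1: "(-8 + (-1)*8 :: 'a) = - 16" by simp
  have 2: "(of_nat (16*n)::'a) = 16 * of_nat n" by simp
  have 3: "of_nat n * (- 16) * z = - (16 * of_nat n * (z::'a))" by (simp add: mult.commute)
  show ?thesis unfolding 1 2 3 by simp
qed


lemma R2g: "zeta a (-8) c (2*m+4) = a * zeta a (-8) c (2*m+3) - of_nat (16*(2*m+3)^2) * zeta a (-8) c (2*m+2)
   + of_nat (2*(2*m+3)*(2*m+2)) * (c * zeta a (-8) c (2*m+1))"
proof -
  have e: "2*m+4 = Suc (Suc (Suc (2*m+1)))" by simp
  have e2: "2*m+1+2 = 2*m+3" "2*m+1+1 = 2*m+2" by simp_all
  have p: "(-1::'a) ^ (2*m+3) = -1" by simp
  have "zeta a (-8) c (2*m+4) = a * zeta a (-8) c (2*m+1+2) + of_nat ((2*m+1+2)^2) * (-8 + (-1)^(2*m+1+2)*8) * zeta a (-8) c (2*m+1+1) + of_nat (2*(2*m+1+2)*(2*m+1+1)) * c * zeta a (-8) c (2*m+1)"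
    unfolding e by (simp only: zeta.simps(4))
  also have "\<dots> = a * zeta a (-8) c (2*m+3) - of_nat (16*(2*m+3)^2) * zeta a (-8) c (2*m+2)
   + of_nat (2*(2*m+3)*(2*m+2)) * (c * zeta a (-8) c (2*m+1))"
    unfolding e2 p by (simp only: mult.assoc[of _ c] aux16)
  finally show ?thesis .
qed

lemma Jm: "J_minus (int n) = R.span {Z n, Z (n+1), Z (n+2)}"
proof -
  have "zeta_minus (int n + 1) = Z (n+1)" using zm[of "n+1", unfolded of_nat_add of_nat_1] .
  moreover have "zeta_minus (int n + 2) = Z (n+2)" using zm[of "n+2", unfolded of_nat_add of_nat_numeral] .
  ultimately show ?thesis unfolding J_minus_def ideal_gen_span zm by simp
qed

lemma invc: assumes "c \<noteq> 0" shows "[:[:inverse (of_nat c)::complex:]:] * of_nat c = (1::cpoly2)"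
proof -
  have "(of_nat c :: cpoly2) = [:[:of_nat c:]:]" by (simp add: of_nat_poly)
  then show ?thesis using assms by (simp add: one_pCons)
qed

lemma solve: assumes "c \<noteq> 0" "of_nat c * w = (v::cpoly2)" shows "w = [:[:inverse (of_nat c)::complex:]:] * v"
proof -
  have "w = ([:[:inverse (of_nat c)::complex:]:] * of_nat c) * w" using invc[OF assms(1)] by simp
  also have "\<dots> = [:[:inverse (of_nat c)::complex:]:] * v" using assms(2) by (simp add: mult.assoc)
  finally show ?thesis .
qed

lemma ab1: "(x::'a::ab_group_add) = a + y \<Longrightarrow> y = x - a" by simp
lemma ab2: "(x::'a::ab_group_add) = a - k + y \<Longrightarrow> y = x - a + k" by simp

abbreviation TT :: "nat \<Rightarrow> cpoly2 set" where "TT m \<equiv> R.span {Z (2*m+2), Z (2*m+3), Z (2*m+4)}"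

lemma inT: "Z (2*m+2) \<in> TT m" "Z (2*m+3) \<in> TT m" "Z (2*m+4) \<in> TT m"
  by (rule R.span_base, simp)+

lemma gamD: "gammaP * Z (2*m) \<in> TT m"
proof -
  have "gammaP * Z (2*m) = [:[:inverse (of_nat (2*(2*m+2)*(2*m+1)))::complex:]:] * (Z (2*m+3) - alphaP * Z (2*m+2))"
  proof (rule solve)
    show "2*(2*m+2)*(2*m+1) \<noteq> 0" by simp
    show "of_nat (2*(2*m+2)*(2*m+1)) * (gammaP * Z (2*m)) = Z (2*m+3) - alphaP * Z (2*m+2)"
      by (rule ab1[OF R1g])
  qed
  also have "\<dots> \<in> TT m"
    by (intro R.span_scale R.span_diff inT)
  finally show ?thesis .
qed

lemma gamE: "gammaP * Z (2*m+1) \<in> TT m"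
proof -
  have "gammaP * Z (2*m+1) = [:[:inverse (of_nat (2*(2*m+3)*(2*m+2)))::complex:]:] *
      (Z (2*m+4) - alphaP * Z (2*m+3) + of_nat (16*(2*m+3)^2) * Z (2*m+2))"
  proof (rule solve)
    show "2*(2*m+3)*(2*m+2) \<noteq> 0" by simp
    show "of_nat (2*(2*m+3)*(2*m+2)) * (gammaP * Z (2*m+1)) = Z (2*m+4) - alphaP * Z (2*m+3) + of_nat (16*(2*m+3)^2) * Z (2*m+2)"
      by (rule ab2[OF R2g])
  qed
  also have "\<dots> \<in> TT m"
    by (intro R.span_scale R.span_diff R.span_add inT)
  finally show ?thesis .
qed

lemma gamA: "gammaP * Z (2*m+2) \<in> TT m"
  by (intro R.span_scale inT)

lemma gam: assumes "x \<in> R.span {Z (2*m), Z (2*m+1), Z (2*m+2)}"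
  shows "gammaP * x \<in> TT m"
  using assms
proof (induction rule: R.span_induct_alt)
  case base then show ?case by (simp add: R.span_zero)
next
  case (step c x y)
  from step(1) have "x = Z (2*m) \<or> x = Z (2*m+1) \<or> x = Z (2*m+2)" by simp
  then have "gammaP * x \<in> TT m" by (elim disjE) (simp_all only: gamD gamE gamA)
  then have "c * (gammaP * x) + gammaP * y \<in> TT m"
    using step(2) by (rule R.span_add[OF R.span_scale])
  moreover have "gammaP * (c * x + y) = c * (gammaP * x) + gammaP * y"
    unfolding distrib_left mult.left_commute[of gammaP c x] ..
  ultimately show ?case by (simp only:)
qed

lemma part1: "TT m =
   R.span (insert (Z (2*m+2)) ((\<lambda>x. gammaP * x) ` R.span {Z (2*m), Z (2*m+1), Z (2*m+2)}))"
  (is "_ = R.span ?T")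
proof -
  have D: "Z (2*m) \<in> R.span {Z (2*m), Z (2*m+1), Z (2*m+2)}" by (rule R.span_base) simp
  have E: "Z (2*m+1) \<in> R.span {Z (2*m), Z (2*m+1), Z (2*m+2)}" by (rule R.span_base) simp
  have gD: "gammaP * Z (2*m) \<in> R.span ?T" by (rule R.span_base) (intro insertI2 imageI D)
  have gE: "gammaP * Z (2*m+1) \<in> R.span ?T" by (rule R.span_base) (intro insertI2 imageI E)
  have A: "Z (2*m+2) \<in> R.span ?T" by (rule R.span_base) (rule insertI1)
  have B: "Z (2*m+3) \<in> R.span ?T"
    unfolding R1g by (intro R.span_add R.span_scale A gD)
  have C: "Z (2*m+4) \<in> R.span ?T"
    unfolding R2g by (intro R.span_add R.span_diff R.span_scale A B gE)
  have 1: "{Z (2*m+2), Z (2*m+3), Z (2*m+4)} \<subseteq> R.span ?T"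
    by (intro insert_subsetI A B C empty_subsetI)
  have 2: "?T \<subseteq> TT m"
  proof (intro insert_subsetI image_subsetI)
    show "Z (2*m+2) \<in> TT m" by (rule inT)
    fix x assume "x \<in> R.span {Z (2*m), Z (2*m+1), Z (2*m+2)}"
    then show "gammaP * x \<in> TT m" by (rule gam)
  qed
  show ?thesis using R.span_eq[of "{Z (2*m+2), Z (2*m+3), Z (2*m+4)}" ?T] 1 2 by (simp only: simp_thms)
qed

lemma part2: "i \<le> m \<Longrightarrow> gammaP ^ i * Z (2*(m-i)) \<in> R.span {Z (2*m), Z (2*m+1), Z (2*m+2)}"
proof (induction i arbitrary: m)
  case 0
  show ?case unfolding power_0 mult_1 diff_zero by (rule R.span_base) simp
next
  case (Suc i)
  then obtain m' where m: "m = Suc m'" by (cases m) auto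
  have "i \<le> m'" using Suc.prems m by simp
  from gam[OF Suc.IH[OF this]] have "gammaP * (gammaP ^ i * Z (2*(m'-i))) \<in> R.span {Z (2*m'+2), Z (2*m'+3), Z (2*m'+4)}" .
  moreover have "2*Suc m' = 2*m'+2" "2*m'+2+1 = 2*m'+3" "2*m'+2+2 = 2*m'+4" "Suc m' - Suc i = m' - i" by simp_all
  ultimately show ?case unfolding m power_Suc mult.assoc by (simp only:)
qed

theorem lemma5p1:
  fixes g :: int
  assumes "even g" and "g \<ge> 2"
  shows "J_minus g = ideal_gen (insert (zeta_minus g) ((\<lambda>x. gammaP * x) ` J_minus (g - 2))) \<and>
         (\<forall>i::int. i \<ge> 0 \<longrightarrow> gammaP ^ nat i * zeta_minus (g - 2 * i) \<in> J_minus g)"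
proof -
  obtain m :: nat where g: "g = int (2*m+2)"
  proof -
    from assms(1) obtain k where k: "g = 2*k" by (auto elim: evenE)
    with assms(2) have "k \<ge> 1" by simp
    then show ?thesis using that[of "nat (k-1)"] k by simp
  qed
  have g2: "g - 2 = int (2*m)" using g by simp
  have JG: "J_minus g = R.span {Z (2*m+2), Z (2*m+3), Z (2*m+4)}"
  proof -
    have "2*m+2+1 = 2*m+3" "2*m+2+2 = 2*m+4" by simp_all
    then show ?thesis unfolding g Jm by (simp only:)
  qed
  have JG2: "J_minus (g-2) = R.span {Z (2*m), Z (2*m+1), Z (2*m+2)}"
    unfolding g2 Jm ..
  have P1: "J_minus g = ideal_gen (insert (zeta_minus g) ((\<lambda>x. gammaP * x) ` J_minus (g - 2)))"
  proof -
    have zg: "zeta_minus g = Z (2*m+2)" by (simp only: g zm)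
    show ?thesis unfolding JG JG2 ideal_gen_span zg by (rule part1)
  qed
  have P2: "gammaP ^ nat i * zeta_minus (g - 2 * i) \<in> J_minus g" if "i \<ge> 0" for i
  proof (cases "nat i \<le> m + 1")
    case True
    have h: "g - 2*i = int (2*((m+1) - nat i))" using g True that by simp
    have z: "zeta_minus (g - 2*i) = Z (2*((m+1) - nat i))" by (simp only: h zm)
    have e: "2*(m+1) = 2*m+2" "2*(m+1)+1 = 2*m+3" "2*(m+1)+2 = 2*m+4" by simp_all
    have e2: "2*m+2+1 = 2*m+3" "2*m+2+2 = 2*m+4" by simp_all
    show ?thesis using part2[OF True] unfolding JG z e e2 .
  next
    case False
    then have "g - 2*i < 0" using g that by simp
    then have z0: "zeta_minus (g - 2*i) = 0" by (simp add: zeta_minus_def zetaZ_def)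
    show ?thesis unfolding JG z0 mult_zero_right by (rule R.span_zero)
  qed
  show ?thesis using P1 P2 by (intro conjI allI impI)
qed

end
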